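(* Suppose the support of $\mathbb F$ is $(0,1)$. Then the first-best payoff $\overline U_i$ is strictly convex and differentiable on $(0,1)$, and its right derivative at $0$ equals $0$.
   Context: Setup. A state $\omega\in\{-1,+1\}$ is drawn with probability $1/2$ each. There are $n\ge2$ agents. Conditional on $\omega$, signals $s_1,\dots,s_n$ are i.i.d. with distribution $\mathbb F_\omega$ on $[0,1]$, normalized so that $s_i=\mathbb P[\omega=+1\mid s_i]$; $\mathbb F_{-1},\mathbb F_{+1}$ mutually absolutely continuous with densities; $\mathbb F=(\mathbb F_{-1}+\mathbb F_{+1})/2$ has a density. The first-best payoff of agent $i$ is, for $s\in[0,1]$, $\overline U_i(s)=s\,\mathbb P[e(s,s_{-i})\mid\omega=+1]-(1-s)\,\mathbb P[e(s,s_{-i})\mid\omega=-1]$, where $e(s,s_{-i})$ is the event $s\prod_{k\ne i}s_k\ge(1-s)\prod_{k\ne i}(1-s_k)$ (i.e., $\mathrm{LR}(s,s_{-i})\ge1$); it is the interim payoff under the efficient allocation $\mathbb I\{\mathrm{LR}(s_i,s_{-i})\ge1\}$. *)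

theory Defs
  imports "HOL-Probability.Probability"
begin

definition strict_convex_on :: "real set \<Rightarrow> (real \<Rightarrow> real) \<Rightarrow> bool" where
  "strict_convex_on S f \<longleftrightarrow> convex S \<and>
     (\<forall>x\<in>S. \<forall>y\<in>S. \<forall>u. x \<noteq> y \<and> 0 < u \<and> u < 1 \<longrightarrow>
        f (u * x + (1 - u) * y) < u * f x + (1 - u) * f y)"

definition sig_dist :: "(real \<Rightarrow> real) \<Rightarrow> real measure" where
  "sig_dist g = density lborel (\<lambda>x. ennreal (g x))"

definition eff_event :: "nat \<Rightarrow> nat \<Rightarrow> real \<Rightarrow> (nat \<Rightarrow> real) \<Rightarrow> bool" where
  "eff_event n i s t \<longleftrightarrow>
     s * (\<Prod>k\<in>{..<n} - {i}. t k) \<ge> (1 - s) * (\<Prod>k\<in>{..<n} - {i}. (1 - t k))"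

definition eff_prob :: "nat \<Rightarrow> nat \<Rightarrow> (real \<Rightarrow> real) \<Rightarrow> real \<Rightarrow> real" where
  "eff_prob n i g s =
     measure (PiM ({..<n} - {i}) (\<lambda>_. sig_dist g))
       {t \<in> space (PiM ({..<n} - {i}) (\<lambda>_. sig_dist g)). eff_event n i s t}"

text \<open>First-best payoff of agent i; gp, gm are the densities of F_{+1}, F_{-1}.\<close>
definition Ubar :: "nat \<Rightarrow> nat \<Rightarrow> (real \<Rightarrow> real) \<Rightarrow> (real \<Rightarrow> real) \<Rightarrow> real \<Rightarrow> real" where
  "Ubar n i gp gm s = s * eff_prob n i gp s - (1 - s) * eff_prob n i gm s"

end

theory Submission
  imports Defs
begin



lemma integral_tendsto_within:
  fixes F :: "real \<Rightarrow> 'a \<Rightarrow> real"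
  assumes meas: "\<And>y. (F y) \<in> borel_measurable Q"
    and Gm: "G \<in> borel_measurable Q"
    and w: "integrable Q w"
    and bnd: "\<And>y. y \<in> S \<Longrightarrow> y \<noteq> x \<Longrightarrow> AE t in Q. \<bar>F y t\<bar> \<le> w t"
    and lim: "AE t in Q. ((\<lambda>y. F y t) \<longlongrightarrow> G t) (at x within S)"
  shows "((\<lambda>y. integral\<^sup>L Q (F y)) \<longlongrightarrow> integral\<^sup>L Q G) (at x within S)"
  unfolding tendsto_at_iff_sequentially
proof (intro allI impI)
  fix X :: "nat \<Rightarrow> real"
  assume X: "\<forall>i. X i \<in> S - {x}" "X \<longlonglongrightarrow> x"
  have "(\<lambda>i. integral\<^sup>L Q (F (X i))) \<longlonglongrightarrow> integral\<^sup>L Q G"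
  proof (rule integral_dominated_convergence[OF Gm meas w])
    show "AE t in Q. (\<lambda>i. F (X i) t) \<longlonglongrightarrow> G t"
      using lim
    proof eventually_elim
      case (elim t)
      then show ?case using X unfolding tendsto_at_iff_sequentially o_def by blast
    qed
    show "AE t in Q. norm (F (X i) t) \<le> w t" for i
      using bnd[of "X i"] X(1) by auto
  qed
  then show "((\<lambda>y. integral\<^sup>L Q (F y)) \<circ> X) \<longlonglongrightarrow> integral\<^sup>L Q G"
    by (simp add: o_def)
qed



lemma prod_indicator_PiE:
  assumes "finite I" "t \<in> extensional I"
  shows "(\<Prod>k\<in>I. indicator (A k) (t k) :: ennreal) = indicator (PiE I A) t"
proof (cases "\<forall>k\<in>I. t k \<in> A k")
  case True
  have "(\<Prod>k\<in>I. indicator (A k) (t k) :: ennreal) = (\<Prod>k\<in>I. 1)"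
    by (rule prod.cong) (auto simp: True)
  then show ?thesis using True assms(2) by (simp add: PiE_def)
next
  case False
  then obtain k where k: "k \<in> I" "t k \<notin> A k" by blast
  then have "(\<Prod>k\<in>I. indicator (A k) (t k) :: ennreal) = 0"
    using assms(1) by (intro prod_zero bexI[of _ k]) auto
  moreover have "t \<notin> PiE I A" using k by (auto simp: PiE_def)
  ultimately show ?thesis by simp
qed

lemma PiM_density:
  fixes N :: "'a measure"
  assumes fin: "finite I" and N: "prob_space N" and f[measurable]: "f \<in> borel_measurable N"
    and D: "prob_space (density N f)"
  shows "PiM I (\<lambda>_. density N f) = density (PiM I (\<lambda>_. N)) (\<lambda>t. \<Prod>k\<in>I. f (t k))"
proof -
  interpret D: product_sigma_finite "\<lambda>_. density N f"
    by (simp add: product_sigma_finite_def prob_space_imp_sigma_finite D)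
  interpret P: product_sigma_finite "\<lambda>_. N"
    by (simp add: product_sigma_finite_def prob_space_imp_sigma_finite N)
  have "density (PiM I (\<lambda>_. N)) (\<lambda>t. \<Prod>k\<in>I. f (t k)) = PiM I (\<lambda>_. density N f)"
  proof (rule D.PiM_eqI[OF fin])
    show "sets (density (PiM I (\<lambda>_. N)) (\<lambda>t. \<Prod>k\<in>I. f (t k))) = sets (PiM I (\<lambda>_. density N f))"
      unfolding sets_density by (rule sets_PiM_cong) simp_all
  next
    fix A assume A: "\<And>k. k \<in> I \<Longrightarrow> A k \<in> sets (density N f)"
    then have A': "\<And>k. k \<in> I \<Longrightarrow> A k \<in> sets N" by simp
    have m: "(\<lambda>t. \<Prod>k\<in>I. f (t k)) \<in> borel_measurable (PiM I (\<lambda>_. N))"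
      by (intro borel_measurable_prod_ennreal measurable_compose[OF measurable_component_singleton, where g=f]) auto
    have PA: "PiE I A \<in> sets (PiM I (\<lambda>_. N))"
      by (rule sets_PiM_I_finite[OF fin]) (simp add: A')
    have "emeasure (density (PiM I (\<lambda>_. N)) (\<lambda>t. \<Prod>k\<in>I. f (t k))) (PiE I A)
        = (\<integral>\<^sup>+ t. (\<Prod>k\<in>I. f (t k)) * indicator (PiE I A) t \<partial>PiM I (\<lambda>_. N))"
      by (rule emeasure_density[OF m PA])
    also have "\<dots> = (\<integral>\<^sup>+ t. (\<Prod>k\<in>I. f (t k) * indicator (A k) (t k)) \<partial>PiM I (\<lambda>_. N))"
    proof (rule nn_integral_cong)
      fix t assume "t \<in> space (PiM I (\<lambda>_. N))"
      then have "t \<in> extensional I" by (simp add: space_PiM PiE_def)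
      then show "(\<Prod>k\<in>I. f (t k)) * indicator (PiE I A) t = (\<Prod>k\<in>I. f (t k) * indicator (A k) (t k))"
        using prod_indicator_PiE[OF fin, of t A] by (simp add: prod.distrib)
    qed
    also have "\<dots> = (\<Prod>k\<in>I. \<integral>\<^sup>+ y. f y * indicator (A k) y \<partial>N)"
      using A' by (intro P.product_nn_integral_prod[OF fin]) auto
    also have "\<dots> = (\<Prod>k\<in>I. emeasure (density N f) (A k))"
      using A' by (intro prod.cong refl) (simp add: emeasure_density)
    finally show "emeasure (density (PiM I (\<lambda>_. N)) (\<lambda>t. \<Prod>k\<in>I. f (t k))) (PiE I A) = (\<Prod>k\<in>I. emeasure (density N f) (A k))" .
  qed
  then show ?thesis by simp
qed



lemma max0_lip: "\<bar>max 0 a - max 0 b\<bar> \<le> \<bar>a - b :: real\<bar>"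
  by (cases "a \<le> 0"; cases "b \<le> 0") (auto simp: max_def abs_if)

lemma W_lip:
  fixes P R y s :: real
  assumes "0 \<le> P" "0 \<le> R"
  shows "\<bar>max 0 (y*P - (1-y)*R) - max 0 (s*P - (1-s)*R)\<bar> \<le> \<bar>y - s\<bar> * (P + R)"
proof -
  have "(y*P - (1-y)*R) - (s*P - (1-s)*R) = (y - s) * (P + R)" by algebra
  then have "\<bar>(y*P - (1-y)*R) - (s*P - (1-s)*R)\<bar> = \<bar>y - s\<bar> * (P + R)"
    using assms by (simp add: abs_mult)
  then show ?thesis using max0_lip[of "y*P - (1-y)*R" "s*P - (1-s)*R"] by linarith
qed

lemma max0_conv:
  fixes A B u :: real
  assumes "0 \<le> u" "u \<le> 1"
  shows "max 0 (u*A + (1-u)*B) \<le> u * max 0 A + (1-u) * max 0 B"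
proof -
  have "u*A \<le> u * max 0 A" using assms by (intro mult_left_mono) auto
  moreover have "(1-u)*B \<le> (1-u) * max 0 B" using assms by (intro mult_left_mono) auto
  moreover have "0 \<le> u * max 0 A" "0 \<le> (1-u) * max 0 B" using assms by auto
  ultimately show ?thesis by simp
qed

lemma W_conv:
  fixes P R u x y :: real
  assumes "0 \<le> u" "u \<le> 1"
  shows "max 0 ((u*x+(1-u)*y)*P - (1-(u*x+(1-u)*y))*R)
     \<le> u * max 0 (x*P - (1-x)*R) + (1-u) * max 0 (y*P - (1-y)*R)"
proof -
  have "(u*x+(1-u)*y)*P - (1-(u*x+(1-u)*y))*R = u*(x*P - (1-x)*R) + (1-u)*(y*P - (1-y)*R)"
    by algebra
  then show ?thesis using max0_conv[OF assms] by simp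
qed

lemma max0_strict:
  fixes A B u :: real
  assumes "0 < u" "u < 1" "A < 0" "0 < B"
  shows "max 0 (u*A + (1-u)*B) < u * max 0 A + (1-u) * max 0 B"
proof -
  have "u*A < 0" using assms by (simp add: mult_pos_neg)
  moreover have "0 < (1-u)*B" using assms by simp
  ultimately show ?thesis using assms by simp
qed

lemma W_strict:
  fixes P R u x y :: real
  assumes "0 < u" "u < 1" "x \<noteq> y"
    and lo: "min x y * P < (1 - min x y) * R" and hi: "(1 - max x y) * R < max x y * P"
  shows "max 0 ((u*x+(1-u)*y)*P - (1-(u*x+(1-u)*y))*R)
     < u * max 0 (x*P - (1-x)*R) + (1-u) * max 0 (y*P - (1-y)*R)"
proof -
  have e: "(u*x+(1-u)*y)*P - (1-(u*x+(1-u)*y))*R = u*(x*P - (1-x)*R) + (1-u)*(y*P - (1-y)*R)"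
    by algebra
  show ?thesis
  proof (cases "x < y")
    case True
    then have "x*P - (1-x)*R < 0" "0 < y*P - (1-y)*R" using lo hi by (auto simp: min_def max_def)
    then have "max 0 (u*(x*P - (1-x)*R) + (1-u)*(y*P - (1-y)*R))
       < u * max 0 (x*P - (1-x)*R) + (1-u) * max 0 (y*P - (1-y)*R)"
      using assms(1,2) by (intro max0_strict) auto
    then show ?thesis unfolding e .
  next
    case False
    then have "y < x" using assms(3) by simp
    then have "y*P - (1-y)*R < 0" "0 < x*P - (1-x)*R" using lo hi by (auto simp: min_def max_def)
    then have "max 0 ((1-u)*(y*P - (1-y)*R) + (1-(1-u))*(x*P - (1-x)*R))
      < (1-u) * max 0 (y*P - (1-y)*R) + (1-(1-u)) * max 0 (x*P - (1-x)*R)"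
      using assms(1,2) by (intro max0_strict) auto
    moreover have "(1-u)*(y*P - (1-y)*R) + (1-(1-u))*(x*P - (1-x)*R) = u*(x*P - (1-x)*R) + (1-u)*(y*P - (1-y)*R)"
      by simp
    ultimately show ?thesis unfolding e by (simp add: algebra_simps)
  qed
qed

lemma exists_pq:
  fixes lo hi :: real and m :: nat
  assumes "0 < lo" "lo < hi" "hi < 1" "m \<ge> 1"
  shows "\<exists>p q. 0 < p \<and> p < q \<and> q < 1 \<and> (1-hi)*(1-p)^m < hi*p^m \<and> lo*q^m < (1-lo)*(1-q)^m"
proof -
  define \<alpha> where "\<alpha> = root m ((1-hi)/hi)"
  define \<beta> where "\<beta> = root m ((1-lo)/lo)"
  have m0: "0 < m" using assms by simp
  have ab0: "0 < (1-hi)/hi" "(1-hi)/hi < (1-lo)/lo" using assms by (auto simp: field_simps)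
  have a0: "0 < \<alpha>" unfolding \<alpha>_def using ab0 m0 by simp
  have ab: "\<alpha> < \<beta>" unfolding \<alpha>_def \<beta>_def using ab0 m0 by (simp add: real_root_less_iff)
  have am: "\<alpha>^m = (1-hi)/hi" unfolding \<alpha>_def using ab0 m0 by simp
  have bm: "\<beta>^m = (1-lo)/lo" unfolding \<beta>_def using ab0 assms m0 by simp
  define g1 where "g1 = (2*\<alpha> + \<beta>)/3"
  define g2 where "g2 = (\<alpha> + 2*\<beta>)/3"
  have g: "\<alpha> < g1" "g1 < g2" "g2 < \<beta>" "0 < g1" using ab a0 unfolding g1_def g2_def by auto
  define p where "p = g1/(1+g1)"
  define q where "q = g2/(1+g2)"
  have p1: "1 - p = 1/(1+g1)" and q1: "1 - q = 1/(1+g2)" using g unfolding p_def q_def by (auto simp: field_simps)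
  have pe: "p = g1 * (1 - p)" and qe: "q = g2 * (1-q)" using g unfolding p_def q_def p1 q1 by (auto simp: field_simps)
  have pos: "0 < p" "p < q" "q < 1" using g unfolding p_def q_def by (auto simp: field_simps)
  have "(1-hi)/hi < g1^m" using am g a0 m0 by (metis power_strict_mono less_imp_le)
  then have "1 - hi < hi * g1^m" using assms by (simp add: field_simps)
  then have "(1-hi)*(1-p)^m < hi * g1^m * (1-p)^m" using pos by (intro mult_strict_right_mono) auto
  also have "hi * g1^m * (1-p)^m = hi * p^m" by (subst (2) pe) (simp add: power_mult_distrib)
  finally have c1: "(1-hi)*(1-p)^m < hi * p^m" .
  have "g2^m < (1-lo)/lo" using bm g a0 m0 by (metis power_strict_mono less_imp_le less_trans)
  then have "lo * g2^m < 1 - lo" using assms by (simp add: field_simps)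
  then have "lo * g2^m * (1-q)^m < (1-lo)*(1-q)^m" using pos by (intro mult_strict_right_mono) auto
  moreover have "lo * g2^m * (1-q)^m = lo * q^m" by (subst (2) qe) (simp add: power_mult_distrib)
  ultimately have c2: "lo * q^m < (1-lo)*(1-q)^m" by simp
  show ?thesis using pos c1 c2 by blast
qed



locale setting =
  fixes n i :: nat and gp gm :: "real \<Rightarrow> real"
  assumes n: "n \<ge> 2" and i: "i < n"
    and meas_p: "gp \<in> borel_measurable borel" and meas_m: "gm \<in> borel_measurable borel"
    and nonneg_p: "\<And>x. gp x \<ge> 0" and nonneg_m: "\<And>x. gm x \<ge> 0"
    and supp_p: "\<And>x. x \<notin> {0..1} \<Longrightarrow> gp x = 0"
    and supp_m: "\<And>x. x \<notin> {0..1} \<Longrightarrow> gm x = 0"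
    and prob_p: "(\<integral>\<^sup>+ x. ennreal (gp x) \<partial>lborel) = 1"
    and prob_m: "(\<integral>\<^sup>+ x. ennreal (gm x) \<partial>lborel) = 1"
    and normalized: "AE x in lborel. x \<in> {0..1} \<longrightarrow> gp x = x * (gp x + gm x)"
    and support: "\<And>a b. 0 \<le> a \<Longrightarrow> a < b \<Longrightarrow> b \<le> 1 \<Longrightarrow>
         measure (sig_dist (\<lambda>x. (gp x + gm x) / 2)) {a<..<b} > 0"
begin

definition "II = {..<n} - {i}"
definition "hh = (\<lambda>x. (gp x + gm x) / 2)"
definition "N0 = sig_dist hh"
definition "QQ = PiM II (\<lambda>_. N0)"
definition "Pp t = (\<Prod>k\<in>II. 2 * t k)"
definition "Pm t = (\<Prod>k\<in>II. 2 * (1 - t k))"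
definition "KK = (2::real) ^ card II"
definition "W s t = max 0 (s * Pp t - (1 - s) * Pm t)"
definition "V s = integral\<^sup>L QQ (W s)"

lemma fin_II: "finite II" unfolding II_def by simp
lemma II_ne: "II \<noteq> {}"
proof -
  have "(if i = 0 then 1 else 0) \<in> II" unfolding II_def using n i by auto
  then show ?thesis by blast
qed
lemma card_II: "card II \<ge> 1" using fin_II II_ne by (simp add: Suc_le_eq card_gt_0_iff)

lemma hh_meas[measurable]: "hh \<in> borel_measurable borel"
  unfolding hh_def using meas_p meas_m by (intro borel_measurable_divide borel_measurable_add) auto
lemma hh_nonneg: "0 \<le> hh x" unfolding hh_def using nonneg_p[of x] nonneg_m[of x] by simp

lemma space_N0[simp]: "space N0 = UNIV" and sets_N0[simp]: "sets N0 = sets borel"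
  unfolding N0_def sig_dist_def by simp_all

lemma ennreal_hh: "ennreal (hh x) = ennreal (1/2) * (ennreal (gp x) + ennreal (gm x))"
proof -
  have "ennreal (hh x) = ennreal (1/2 * (gp x + gm x))" by (simp add: hh_def)
  also have "\<dots> = ennreal (1/2) * ennreal (gp x + gm x)"
    using nonneg_p[of x] nonneg_m[of x] by (intro ennreal_mult) auto
  also have "ennreal (gp x + gm x) = ennreal (gp x) + ennreal (gm x)"
    using nonneg_p[of x] nonneg_m[of x] by (intro ennreal_plus) auto
  finally show ?thesis .
qed

lemma N0_prob: "prob_space N0"
proof (rule prob_spaceI)
  have "(\<integral>\<^sup>+ x. ennreal (hh x) \<partial>lborel) = (\<integral>\<^sup>+ x. ennreal (1/2) * (ennreal (gp x) + ennreal (gm x)) \<partial>lborel)"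
    by (simp only: ennreal_hh)
  also have "\<dots> = ennreal (1/2) * ((\<integral>\<^sup>+ x. ennreal (gp x) \<partial>lborel) + (\<integral>\<^sup>+ x. ennreal (gm x) \<partial>lborel))"
    using meas_p meas_m by (simp add: nn_integral_cmult nn_integral_add)
  also have "\<dots> = ennreal (1/2) * ennreal 2" using prob_p prob_m by simp
  also have "\<dots> = ennreal (1/2 * 2)" by (rule ennreal_mult[symmetric]) auto
  also have "\<dots> = 1" by simp
  finally have "(\<integral>\<^sup>+ x. ennreal (hh x) \<partial>lborel) = 1" .
  then show "emeasure N0 (space N0) = 1"
    unfolding N0_def sig_dist_def by (simp add: emeasure_density)
qed

lemma dens_p: "sig_dist gp = density N0 (\<lambda>x. ennreal (2 * x))"
proof -
  have "density N0 (\<lambda>x. ennreal (2 * x)) = density lborel (\<lambda>x. ennreal (hh x) * ennreal (2 * x))"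
    unfolding N0_def sig_dist_def by (rule density_density_eq) auto
  also have "\<dots> = density lborel (\<lambda>x. ennreal (gp x))"
  proof (rule density_cong)
    show "(\<lambda>x. ennreal (hh x) * ennreal (2 * x)) \<in> borel_measurable lborel" by simp
    show "(\<lambda>x. ennreal (gp x)) \<in> borel_measurable lborel" using meas_p by simp
    show "AE x in lborel. ennreal (hh x) * ennreal (2 * x) = ennreal (gp x)"
      using normalized
    proof eventually_elim
      case (elim x)
      show ?case
      proof (cases "x \<in> {0..1}")
        case True
        then have "gp x = hh x * (2 * x)" using elim unfolding hh_def by (simp add: algebra_simps)
        then show ?thesis using True hh_nonneg[of x] by (simp add: ennreal_mult)
      next
        case False
        then show ?thesis using supp_p[OF False] supp_m[OF False] unfolding hh_def by simp
      qed
    qed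
  qed
  finally show ?thesis unfolding sig_dist_def by simp
qed

lemma dens_m: "sig_dist gm = density N0 (\<lambda>x. ennreal (2 * (1 - x)))"
proof -
  have "density N0 (\<lambda>x. ennreal (2 * (1 - x))) = density lborel (\<lambda>x. ennreal (hh x) * ennreal (2 * (1 - x)))"
    unfolding N0_def sig_dist_def by (rule density_density_eq) auto
  also have "\<dots> = density lborel (\<lambda>x. ennreal (gm x))"
  proof (rule density_cong)
    show "(\<lambda>x. ennreal (hh x) * ennreal (2 * (1 - x))) \<in> borel_measurable lborel" by simp
    show "(\<lambda>x. ennreal (gm x)) \<in> borel_measurable lborel" using meas_m by simp
    show "AE x in lborel. ennreal (hh x) * ennreal (2 * (1 - x)) = ennreal (gm x)"
      using normalized
    proof eventually_elim
      case (elim x)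
      show ?case
      proof (cases "x \<in> {0..1}")
        case True
        then have "gm x = hh x * (2 * (1 - x))" using elim unfolding hh_def by (simp add: algebra_simps)
        then show ?thesis using True hh_nonneg[of x] by (simp add: ennreal_mult)
      next
        case False
        then show ?thesis using supp_p[OF False] supp_m[OF False] unfolding hh_def by simp
      qed
    qed
  qed
  finally show ?thesis unfolding sig_dist_def by simp
qed

lemma meas_N0: "f \<in> borel_measurable borel \<Longrightarrow> f \<in> borel_measurable N0"
  by (subst measurable_cong_sets[OF sets_N0 refl])

lemma sig_prob: 
  assumes "g \<in> borel_measurable borel" "(\<integral>\<^sup>+ x. ennreal (g x) \<partial>lborel) = 1"
  shows "prob_space (sig_dist g)"
  by (rule prob_spaceI) (use assms in \<open>simp add: sig_dist_def emeasure_density\<close>)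

lemma Mp: "PiM II (\<lambda>_. sig_dist gp) = density QQ (\<lambda>t. \<Prod>k\<in>II. ennreal (2 * t k))"
  unfolding dens_p QQ_def
  by (rule PiM_density[OF fin_II N0_prob]) (use sig_prob[OF meas_p prob_p] dens_p in \<open>auto intro!: meas_N0\<close>)

lemma Mm: "PiM II (\<lambda>_. sig_dist gm) = density QQ (\<lambda>t. \<Prod>k\<in>II. ennreal (2 * (1 - t k)))"
  unfolding dens_m QQ_def
  by (rule PiM_density[OF fin_II N0_prob]) (use sig_prob[OF meas_m prob_m] dens_m in \<open>auto intro!: meas_N0\<close>)

lemma QQ_prob: "prob_space QQ"
  unfolding QQ_def by (rule prob_space_PiM) (rule N0_prob)

lemma space_QQ: "space QQ = PiE II (\<lambda>_. UNIV)"
  unfolding QQ_def by (simp add: space_PiM)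

lemma AE_N0: "AE x in N0. 0 < x \<and> x < 1"
proof -
  have "AE x in lborel. 0 < ennreal (hh x) \<longrightarrow> 0 < x \<and> x < 1"
    using AE_lborel_singleton[of 0] AE_lborel_singleton[of 1]
  proof eventually_elim
    case (elim x)
    show ?case
    proof
      assume "0 < ennreal (hh x)"
      then have "hh x \<noteq> 0" by auto
      have "x \<in> {0..1}"
      proof (rule ccontr)
        assume "x \<notin> {0..1}"
        then have "hh x = 0" using supp_p[of x] supp_m[of x] unfolding hh_def by simp
        then show False using \<open>hh x \<noteq> 0\<close> by simp
      qed
      then show "0 < x \<and> x < 1" using elim by auto
    qed
  qed
  then show ?thesis unfolding N0_def sig_dist_def by (subst AE_density) auto
qed

lemma AE01: "AE t in QQ. \<forall>k\<in>II. 0 < t k \<and> t k < 1"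
proof -
  interpret P: product_prob_space "\<lambda>_::nat. N0" II
    by (simp add: product_prob_space_def product_sigma_finite_def product_prob_space_axioms_def
        N0_prob prob_space_imp_sigma_finite)
  show ?thesis
    unfolding QQ_def
    by (rule AE_finite_allI[OF fin_II]) (rule P.AE_component, simp, rule AE_N0)
qed

lemma comp_meas: "k \<in> II \<Longrightarrow> g \<in> borel_measurable borel \<Longrightarrow> (\<lambda>t. g (t k)) \<in> borel_measurable QQ"
  unfolding QQ_def
  by (rule measurable_compose[where g=g], rule measurable_component_singleton) (simp_all add: meas_N0)

lemma Pp_meas[measurable]: "Pp \<in> borel_measurable QQ"
  unfolding Pp_def by (rule borel_measurable_prod) (rule comp_meas, auto)

lemma Pm_meas[measurable]: "Pm \<in> borel_measurable QQ"
  unfolding Pm_def by (rule borel_measurable_prod) (rule comp_meas, auto)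

lemma W_meas[measurable]: "W s \<in> borel_measurable QQ"
  unfolding W_def by measurable

lemma bounds_pt:
  assumes "\<forall>k\<in>II. 0 < t k \<and> t k < 1"
  shows "0 < Pp t \<and> Pp t \<le> KK \<and> 0 < Pm t \<and> Pm t \<le> KK"
proof -
  have "0 < Pp t" unfolding Pp_def using assms by (intro prod_pos) auto
  moreover have "0 < Pm t" unfolding Pm_def using assms by (intro prod_pos) auto
  moreover have "Pp t \<le> (\<Prod>k\<in>II. 2)" unfolding Pp_def using assms by (intro prod_mono) auto
  moreover have "Pm t \<le> (\<Prod>k\<in>II. 2)" unfolding Pm_def using assms by (intro prod_mono) auto
  ultimately show ?thesis unfolding KK_def by simp
qed

lemma AE_bounds: "AE t in QQ. 0 < Pp t \<and> Pp t \<le> KK \<and> 0 < Pm t \<and> Pm t \<le> KK"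
  using AE01 by eventually_elim (rule bounds_pt)

lemma W_bound: "AE t in QQ. \<bar>W s t\<bar> \<le> (2 * \<bar>s\<bar> + 2) * KK"
  using AE_bounds
proof eventually_elim
  case (elim t)
  have "\<bar>W s t\<bar> = \<bar>max 0 (s * Pp t - (1 - s) * Pm t) - max 0 (0 * Pp t - (1 - 0) * Pm t)\<bar>"
    unfolding W_def using elim by simp
  also have "\<dots> \<le> \<bar>s - 0\<bar> * (Pp t + Pm t)" using elim by (intro W_lip) auto
  also have "\<dots> \<le> \<bar>s\<bar> * (2 * KK)" using elim by (simp only: diff_zero, intro mult_left_mono) auto
  also have "\<dots> \<le> (2 * \<bar>s\<bar> + 2) * KK" using elim by (simp add: algebra_simps)
  finally show ?case .
qed

lemma fin_QQ: "finite_measure QQ"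
  using QQ_prob by (simp add: prob_space_def)

lemma KK_pos: "0 < KK" unfolding KK_def by simp

lemma Pp_eq: "Pp t = KK * (\<Prod>k\<in>II. t k)"
  unfolding Pp_def KK_def by (simp add: prod.distrib)

lemma Pm_eq: "Pm t = KK * (\<Prod>k\<in>II. (1 - t k))"
  unfolding Pm_def KK_def by (subst prod.distrib) simp

lemma eff_iff: "eff_event n i s t \<longleftrightarrow> (1 - s) * Pm t \<le> s * Pp t"
proof -
  have "eff_event n i s t \<longleftrightarrow> (1 - s) * (\<Prod>k\<in>II. (1 - t k)) \<le> s * (\<Prod>k\<in>II. t k)"
    unfolding eff_event_def II_def by simp
  also have "\<dots> \<longleftrightarrow> KK * ((1 - s) * (\<Prod>k\<in>II. (1 - t k))) \<le> KK * (s * (\<Prod>k\<in>II. t k))"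
    using KK_pos by simp
  also have "\<dots> \<longleftrightarrow> (1 - s) * Pm t \<le> s * Pp t"
    unfolding Pp_eq Pm_eq by (simp add: algebra_simps)
  finally show ?thesis .
qed

definition "EE s = {t \<in> space QQ. eff_event n i s t}"

lemma EE_alt: "EE s = {t \<in> space QQ. (1 - s) * Pm t \<le> s * Pp t}"
  unfolding EE_def eff_iff ..

lemma EE_sets: "EE s \<in> sets QQ"
  unfolding EE_alt by (rule borel_measurable_le) simp_all

lemma dens_measure:
  assumes M: "M = density QQ (\<lambda>t. \<Prod>k\<in>II. ennreal (2 * f (t k)))"
    and f: "f \<in> borel_measurable borel" and fpos: "\<And>x. 0 < x \<Longrightarrow> x < 1 \<Longrightarrow> 0 \<le> f x"
    and E: "E \<in> sets QQ"
  shows "measure M E = (\<integral> t. (\<Prod>k\<in>II. 2 * f (t k)) * indicator E t \<partial>QQ)"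
proof -
  have fm: "(\<lambda>t. \<Prod>k\<in>II. ennreal (2 * f (t k))) \<in> borel_measurable QQ"
    by (rule borel_measurable_prod_ennreal) (rule comp_meas, simp, use f in measurable)
  have gm: "(\<lambda>t. (\<Prod>k\<in>II. 2 * f (t k)) * indicator E t) \<in> borel_measurable QQ"
  proof -
    have "(\<lambda>t. \<Prod>k\<in>II. 2 * f (t k)) \<in> borel_measurable QQ"
      by (rule borel_measurable_prod) (rule comp_meas, simp, use f in measurable)
    then show ?thesis by (intro borel_measurable_times borel_measurable_indicator E)
  qed
  have "emeasure M E = (\<integral>\<^sup>+ t. (\<Prod>k\<in>II. ennreal (2 * f (t k))) * indicator E t \<partial>QQ)"
    unfolding M by (rule emeasure_density[OF fm E])
  also have "\<dots> = (\<integral>\<^sup>+ t. ennreal ((\<Prod>k\<in>II. 2 * f (t k)) * indicator E t) \<partial>QQ)"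
    using AE01
  proof (intro nn_integral_cong_AE, eventually_elim)
    case (elim t)
    then have nn: "\<And>k. k \<in> II \<Longrightarrow> 0 \<le> 2 * f (t k)" using fpos by auto
    then have "(\<Prod>k\<in>II. ennreal (2 * f (t k))) = ennreal (\<Prod>k\<in>II. 2 * f (t k))"
      by (rule prod_ennreal)
    moreover have "0 \<le> (\<Prod>k\<in>II. 2 * f (t k))" using nn by (rule prod_nonneg)
    ultimately show ?case by (simp add: indicator_def)
  qed
  finally have e: "emeasure M E = (\<integral>\<^sup>+ t. ennreal ((\<Prod>k\<in>II. 2 * f (t k)) * indicator E t) \<partial>QQ)" .
  have "(\<integral> t. (\<Prod>k\<in>II. 2 * f (t k)) * indicator E t \<partial>QQ) = enn2real (\<integral>\<^sup>+ t. ennreal ((\<Prod>k\<in>II. 2 * f (t k)) * indicator E t) \<partial>QQ)"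
  proof (rule integral_eq_nn_integral[OF gm])
    show "AE t in QQ. 0 \<le> (\<Prod>k\<in>II. 2 * f (t k)) * indicator E t"
      using AE01
    proof eventually_elim
      case (elim t)
      then have "0 \<le> (\<Prod>k\<in>II. 2 * f (t k))" using fpos by (intro prod_nonneg) auto
      then show ?case by (simp add: indicator_def)
    qed
  qed
  then show ?thesis unfolding measure_def e by simp
qed

lemma space_sig: "space (PiM II (\<lambda>_. sig_dist g)) = space QQ"
  by (simp add: space_PiM space_QQ sig_dist_def)

lemma eff_prob_p: "eff_prob n i gp s = (\<integral> t. Pp t * indicator (EE s) t \<partial>QQ)"
proof -
  have "eff_prob n i gp s = measure (PiM II (\<lambda>_. sig_dist gp)) (EE s)"
    unfolding eff_prob_def EE_def II_def[symmetric] space_sig ..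
  also have "\<dots> = (\<integral> t. (\<Prod>k\<in>II. 2 * (\<lambda>x. x) (t k)) * indicator (EE s) t \<partial>QQ)"
    by (rule dens_measure[OF Mp _ _ EE_sets]) auto
  finally show ?thesis unfolding Pp_def by simp
qed

lemma eff_prob_m: "eff_prob n i gm s = (\<integral> t. Pm t * indicator (EE s) t \<partial>QQ)"
proof -
  have "eff_prob n i gm s = measure (PiM II (\<lambda>_. sig_dist gm)) (EE s)"
    unfolding eff_prob_def EE_def II_def[symmetric] space_sig ..
  also have "\<dots> = (\<integral> t. (\<Prod>k\<in>II. 2 * (\<lambda>x. 1 - x) (t k)) * indicator (EE s) t \<partial>QQ)"
    by (rule dens_measure[OF Mm _ _ EE_sets]) auto
  finally show ?thesis unfolding Pm_def by simp
qed

lemma int_bounded: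
  fixes f :: "(nat \<Rightarrow> real) \<Rightarrow> real"
  assumes "f \<in> borel_measurable QQ" "AE t in QQ. \<bar>f t\<bar> \<le> B"
  shows "integrable QQ f"
  using finite_measure.integrable_const_bound[OF fin_QQ, of f B] assms by simp

lemma int_W: "integrable QQ (W s)"
  by (rule int_bounded[OF W_meas W_bound])

lemma int_Pp_E: "integrable QQ (\<lambda>t. Pp t * indicator (EE s) t)"
proof (rule int_bounded)
  show "(\<lambda>t. Pp t * indicator (EE s) t) \<in> borel_measurable QQ"
    using EE_sets by measurable
  show "AE t in QQ. \<bar>Pp t * indicator (EE s) t\<bar> \<le> KK"
    using AE_bounds by eventually_elim (auto simp: indicator_def)
qed

lemma int_Pm_E: "integrable QQ (\<lambda>t. Pm t * indicator (EE s) t)"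
proof (rule int_bounded)
  show "(\<lambda>t. Pm t * indicator (EE s) t) \<in> borel_measurable QQ"
    using EE_sets by measurable
  show "AE t in QQ. \<bar>Pm t * indicator (EE s) t\<bar> \<le> KK"
    using AE_bounds by eventually_elim (auto simp: indicator_def)
qed

lemma Ubar_V: "Ubar n i gp gm s = V s"
proof -
  have "Ubar n i gp gm s = s * (\<integral> t. Pp t * indicator (EE s) t \<partial>QQ) - (1 - s) * (\<integral> t. Pm t * indicator (EE s) t \<partial>QQ)"
    unfolding Ubar_def eff_prob_p eff_prob_m ..
  also have "\<dots> = (\<integral> t. s * (Pp t * indicator (EE s) t) - (1 - s) * (Pm t * indicator (EE s) t) \<partial>QQ)"
    using int_Pp_E int_Pm_E by simp
  also have "\<dots> = V s"
  proof -
    have pt: "\<And>t. t \<in> space QQ \<Longrightarrow> s * (Pp t * indicator (EE s) t) - (1 - s) * (Pm t * indicator (EE s) t) = W s t"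
      unfolding W_def EE_alt by (auto simp: indicator_def)
    show ?thesis unfolding V_def by (rule Bochner_Integration.integral_cong[OF refl pt])
  qed
  finally show ?thesis .
qed

lemma W0: "AE t in QQ. W 0 t = 0"
  using AE_bounds by eventually_elim (simp add: W_def)

lemma V0: "V 0 = 0"
proof -
  have "V 0 = (\<integral> t. 0 \<partial>QQ)" unfolding V_def by (rule integral_cong_AE) (use W0 in auto)
  then show ?thesis by simp
qed

lemma W_diff_bound:
  assumes "0 < Pp t \<and> Pp t \<le> KK \<and> 0 < Pm t \<and> Pm t \<le> KK" "y \<noteq> s"
  shows "\<bar>(W y t - W s t) / (y - s)\<bar> \<le> 2 * KK"
proof -
  have "\<bar>W y t - W s t\<bar> \<le> \<bar>y - s\<bar> * (Pp t + Pm t)"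
    unfolding W_def using assms by (intro W_lip) auto
  also have "\<dots> \<le> \<bar>y - s\<bar> * (2 * KK)" using assms by (intro mult_left_mono) auto
  finally have "\<bar>W y t - W s t\<bar> \<le> \<bar>y - s\<bar> * (2 * KK)" .
  then show ?thesis using assms by (simp add: abs_divide divide_le_eq mult.commute)
qed

lemma V_quot: "(V y - V s) / (y - s) = (\<integral> t. (W y t - W s t) / (y - s) \<partial>QQ)"
  unfolding V_def using int_W by simp

lemma V_right0: "(V has_real_derivative 0) (at_right 0)"
  unfolding has_field_derivative_iff
proof -
  have "((\<lambda>y. \<integral> t. (W y t - W 0 t) / (y - 0) \<partial>QQ) \<longlongrightarrow> (\<integral> t. 0 \<partial>QQ)) (at 0 within {0<..})"
  proof (rule integral_tendsto_within)
    show "(\<lambda>t. (W y t - W 0 t) / (y - 0)) \<in> borel_measurable QQ" for y by measurable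
    show "(\<lambda>t. 0::real) \<in> borel_measurable QQ" by simp
    show "integrable QQ (\<lambda>t. 2 * KK)" using fin_QQ by (simp add: finite_measure.integrable_const)
    show "AE t in QQ. \<bar>(W y t - W 0 t) / (y - 0)\<bar> \<le> 2 * KK" if "y \<noteq> 0" for y
      using AE_bounds by eventually_elim (rule W_diff_bound, use that in auto)
    show "AE t in QQ. ((\<lambda>y. (W y t - W 0 t) / (y - 0)) \<longlongrightarrow> 0) (at 0 within {0<..})"
      using AE_bounds
    proof eventually_elim
      case (elim t)
      define d where "d = Pm t / (Pp t + Pm t)"
      have d: "0 < d" unfolding d_def using elim by simp
      have "eventually (\<lambda>y. y \<in> {0<..<d}) (at_right 0)" by (rule eventually_at_right_real[OF d])
      then have "eventually (\<lambda>y. (W y t - W 0 t) / (y - 0) = 0) (at_right 0)"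
      proof eventually_elim
        case (elim y)
        then have "y * (Pp t + Pm t) < Pm t" using \<open>0 < Pp t \<and> _\<close> unfolding d_def
          by (simp add: less_divide_eq)
        then have "W y t = 0" unfolding W_def by (simp add: algebra_simps)
        moreover have "W 0 t = 0" unfolding W_def using \<open>0 < Pp t \<and> _\<close> by simp
        ultimately show ?case by simp
      qed
      then show ?case by (rule tendsto_eventually)
    qed
  qed
  then show "((\<lambda>y. (V y - V 0) / (y - 0)) \<longlongrightarrow> 0) (at 0 within {0<..})"
    unfolding V_quot by simp
qed

lemma N0_single: "emeasure N0 {c} = 0"
proof -
  have "emeasure N0 {c} = (\<integral>\<^sup>+ x. ennreal (hh x) * indicator {c} x \<partial>lborel)"
    unfolding N0_def sig_dist_def by (rule emeasure_density) auto
  also have "\<dots> = (\<integral>\<^sup>+ (x::real). 0 \<partial>lborel)"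
  proof (rule nn_integral_cong_AE)
    show "AE x in lborel. ennreal (hh x) * indicator {c} x = 0"
      using AE_lborel_singleton[of c] by eventually_elim simp
  qed
  finally show ?thesis by simp
qed

lemma Z01_sets: "{t \<in> space QQ. \<forall>k\<in>II. 0 < t k \<and> t k < 1} \<in> sets QQ"
proof (rule sets.sets_Collect_finite_All[OF _ fin_II])
  fix k assume k: "k \<in> II"
  have m: "(\<lambda>t. t k) \<in> borel_measurable QQ" using comp_meas[OF k, of "\<lambda>x. x"] by simp
  show "{t \<in> space QQ. 0 < t k \<and> t k < 1} \<in> sets QQ"
    by (intro sets.sets_Collect_conj borel_measurable_less m borel_measurable_const)
qed

lemma atomless:
  assumes s: "0 < s" "s < 1"
  shows "AE t in QQ. s * Pp t \<noteq> (1 - s) * Pm t"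
proof -
  obtain j where j: "j \<in> II" using II_ne by blast
  define J where "J = II - {j}"
  have IJ: "II = insert j J" "j \<notin> J" "finite J" using j fin_II unfolding J_def by auto
  interpret P: product_sigma_finite "\<lambda>_::nat. N0"
    by (simp add: product_sigma_finite_def N0_prob prob_space_imp_sigma_finite)
  define Z where "Z = {t \<in> space QQ. s * Pp t = (1 - s) * Pm t \<and> (\<forall>k\<in>II. 0 < t k \<and> t k < 1)}"
  have Zs: "Z \<in> sets QQ"
  proof -
    have "Z = {t \<in> space QQ. s * Pp t = (1 - s) * Pm t} \<inter> {t \<in> space QQ. \<forall>k\<in>II. 0 < t k \<and> t k < 1}"
      unfolding Z_def by auto
    also have "\<dots> \<in> sets QQ" using Z01_sets
      by (intro sets.Int borel_measurable_eq borel_measurable_times borel_measurable_const Pp_meas Pm_meas)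
    finally show ?thesis .
  qed
  define P' where "P' x = (\<Prod>k\<in>J. 2 * x k)" for x :: "nat \<Rightarrow> real"
  define R' where "R' x = (\<Prod>k\<in>J. 2 * (1 - x k))" for x :: "nat \<Rightarrow> real"
  define y0 where "y0 x = (1 - s) * R' x / (s * P' x + (1 - s) * R' x)" for x
  have QQ': "QQ = PiM (insert j J) (\<lambda>_. N0)" unfolding QQ_def IJ(1) ..
  have pt: "indicator Z (x(j := y)) \<le> (indicator {y0 x} y :: ennreal)" for x y
  proof (cases "x(j := y) \<in> Z")
    case True
    then have eq: "s * Pp (x(j := y)) = (1 - s) * Pm (x(j := y))"
      and c: "\<forall>k\<in>II. 0 < (x(j := y)) k \<and> (x(j := y)) k < 1" unfolding Z_def by auto
    have cJ: "\<forall>k\<in>J. 0 < x k \<and> x k < 1" using c IJ by (auto split: if_splits)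
    have y: "0 < y" "y < 1" using c j by auto
    have Jeq: "(\<Prod>k\<in>J. f ((x(j := y)) k)) = (\<Prod>k\<in>J. f (x k))" for f :: "real \<Rightarrow> real"
      by (rule prod.cong) (use IJ in auto)
    have "Pp (x(j := y)) = 2 * y * P' x"
      unfolding Pp_def P'_def IJ(1) prod.insert[OF IJ(3,2)]
      using Jeq[of "\<lambda>z. 2 * z"] by simp
    moreover have "Pm (x(j := y)) = 2 * (1 - y) * R' x"
      unfolding Pm_def R'_def IJ(1) prod.insert[OF IJ(3,2)]
      using Jeq[of "\<lambda>z. 2 * (1 - z)"] by simp
    moreover have "0 < P' x" "0 < R' x" unfolding P'_def R'_def using cJ by (auto intro!: prod_pos)
    ultimately have eq2: "s * (2 * y * P' x) = (1 - s) * (2 * (1 - y) * R' x)"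
      and pos: "0 < P' x" "0 < R' x" using eq by auto
    have "s * (2 * y * P' x) - (1 - s) * (2 * (1 - y) * R' x) = 2 * (y * (s * P' x + (1 - s) * R' x) - (1 - s) * R' x)"
      by (simp add: algebra_simps)
    then have e3: "y * (s * P' x + (1 - s) * R' x) = (1 - s) * R' x" using eq2 by simp
    have "0 < s * P' x + (1 - s) * R' x" using pos s by (intro add_pos_pos mult_pos_pos) auto
    then have "y = y0 x" unfolding y0_def using e3 by (simp add: eq_divide_eq)
    then show ?thesis using True by (auto simp: indicator_def)
  qed simp
  have "emeasure QQ Z = (\<integral>\<^sup>+ t. indicator Z t \<partial>QQ)" using Zs by simp
  also have "\<dots> = (\<integral>\<^sup>+ x. (\<integral>\<^sup>+ y. indicator Z (x(j := y)) \<partial>N0) \<partial>PiM J (\<lambda>_. N0))"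
    unfolding QQ' by (rule P.product_nn_integral_insert[OF IJ(3,2)]) (use Zs QQ' in simp)
  also have "\<dots> \<le> (\<integral>\<^sup>+ x. (\<integral>\<^sup>+ y. indicator {y0 x} y \<partial>N0) \<partial>PiM J (\<lambda>_. N0))"
    by (intro nn_integral_mono pt)
  also have "\<dots> = 0" by (simp add: N0_single)
  finally have "Z \<in> null_sets QQ" using Zs by (simp add: null_sets_def)
  then have "AE t in QQ. t \<notin> Z" by (rule AE_not_in)
  then show ?thesis using AE01 AE_space
    by eventually_elim (auto simp: Z_def)
qed

lemma W_lin: "c * (P + R) - R = c * P - (1 - c) * (R::real)"
  by (simp add: algebra_simps)

lemma V_deriv:
  assumes s: "0 < s" "s < 1"
  shows "(V has_real_derivative (\<integral> t. (if (1 - s) * Pm t < s * Pp t then Pp t + Pm t else 0) \<partial>QQ)) (at s)"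
  unfolding has_field_derivative_iff
proof -
  define G where "G t = (if (1 - s) * Pm t < s * Pp t then Pp t + Pm t else 0)" for t
  have "((\<lambda>y. \<integral> t. (W y t - W s t) / (y - s) \<partial>QQ) \<longlongrightarrow> (\<integral> t. G t \<partial>QQ)) (at s within UNIV)"
  proof (rule integral_tendsto_within)
    show "(\<lambda>t. (W y t - W s t) / (y - s)) \<in> borel_measurable QQ" for y by measurable
    show "G \<in> borel_measurable QQ" unfolding G_def
      by (intro measurable_If borel_measurable_add Pp_meas Pm_meas borel_measurable_const
          borel_measurable_less borel_measurable_times)
    show "integrable QQ (\<lambda>t. 2 * KK)" using fin_QQ by (simp add: finite_measure.integrable_const)
    show "AE t in QQ. \<bar>(W y t - W s t) / (y - s)\<bar> \<le> 2 * KK" if "y \<noteq> s" for y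
      using AE_bounds by eventually_elim (rule W_diff_bound, use that in auto)
    show "AE t in QQ. ((\<lambda>y. (W y t - W s t) / (y - s)) \<longlongrightarrow> G t) (at s within UNIV)"
      using AE_bounds atomless[OF s]
    proof eventually_elim
      case (elim t)
      define c where "c = Pm t / (Pp t + Pm t)"
      have ab: "0 < Pp t + Pm t" using elim by simp
      have iff: "y * Pp t - (1 - y) * Pm t < 0 \<longleftrightarrow> y < c" 
        and iff2: "0 < y * Pp t - (1 - y) * Pm t \<longleftrightarrow> c < y" for y
      proof -
        have l: "y * Pp t - (1 - y) * Pm t = y * (Pp t + Pm t) - Pm t" by (simp add: algebra_simps)
        have "y < c \<longleftrightarrow> y * (Pp t + Pm t) < Pm t" unfolding c_def using ab by (simp add: less_divide_eq)
        moreover have "c < y \<longleftrightarrow> Pm t < y * (Pp t + Pm t)" unfolding c_def using ab by (simp add: divide_less_eq)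
        ultimately show "y * Pp t - (1 - y) * Pm t < 0 \<longleftrightarrow> y < c"
          "0 < y * Pp t - (1 - y) * Pm t \<longleftrightarrow> c < y" using l by linarith+
      qed
      show ?case
      proof (cases "(1 - s) * Pm t < s * Pp t")
        case True
        then have sc: "c < s" using iff2[of s] by simp
        have "eventually (\<lambda>y. (W y t - W s t) / (y - s) = G t) (at s within UNIV)"
          unfolding eventually_at
        proof (intro exI[of _ "s - c"] conjI ballI impI)
          show "0 < s - c" using sc by simp
          fix y assume y: "y \<noteq> s \<and> dist y s < s - c"
          then have "c < y" by (auto simp: dist_real_def)
          then have "W y t = y * Pp t - (1 - y) * Pm t" "W s t = s * Pp t - (1 - s) * Pm t"
            unfolding W_def using iff2[of y] iff2[of s] sc by auto
          then have "W y t - W s t = (y - s) * (Pp t + Pm t)" by (simp add: algebra_simps)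
          then show "(W y t - W s t) / (y - s) = G t" unfolding G_def using True y by simp
        qed
        then show ?thesis by (rule tendsto_eventually)
      next
        case False
        then have "s * Pp t - (1 - s) * Pm t < 0" using elim by auto
        then have sc: "s < c" using iff[of s] by simp
        have "eventually (\<lambda>y. (W y t - W s t) / (y - s) = G t) (at s within UNIV)"
          unfolding eventually_at
        proof (intro exI[of _ "c - s"] conjI ballI impI)
          show "0 < c - s" using sc by simp
          fix y assume y: "y \<noteq> s \<and> dist y s < c - s"
          then have "y < c" by (auto simp: dist_real_def)
          then have "W y t = 0" "W s t = 0"
            unfolding W_def using iff[of y] iff[of s] sc by auto
          then show "(W y t - W s t) / (y - s) = G t" unfolding G_def using False by simp
        qed
        then show ?thesis by (rule tendsto_eventually)
      qed
    qed
  qed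
  then show "((\<lambda>y. (V y - V s) / (y - s)) \<longlongrightarrow> (\<integral> t. (if (1 - s) * Pm t < s * Pp t then Pp t + Pm t else 0) \<partial>QQ)) (at s)"
    unfolding V_quot G_def by simp
qed

lemma V_differentiable: "0 < s \<Longrightarrow> s < 1 \<Longrightarrow> V differentiable (at s)"
  by (rule differentiableI, rule has_field_derivative_imp_has_derivative, rule V_deriv)

lemma box_pos:
  assumes pq: "0 < p" "p < q" "q < 1"
  shows "emeasure QQ (PiE II (\<lambda>_. {p<..<q})) \<noteq> 0"
proof -
  interpret P: product_sigma_finite "\<lambda>_::nat. N0"
    by (simp add: product_sigma_finite_def N0_prob prob_space_imp_sigma_finite)
  have "measure N0 {p<..<q} > 0" unfolding N0_def hh_def using support[of p q] pq by simp
  then have ne: "emeasure N0 {p<..<q} \<noteq> 0" by (auto simp: measure_def)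
  have "emeasure QQ (PiE II (\<lambda>_. {p<..<q})) = (\<Prod>k\<in>II. emeasure N0 {p<..<q})"
    unfolding QQ_def by (rule P.emeasure_PiM[OF fin_II]) simp
  then show ?thesis using ne fin_II by simp
qed

lemma box_bounds:
  fixes p q :: real
  assumes t: "\<forall>k\<in>II. p < t k \<and> t k < q" and pq: "0 < p" "p < q" "q < 1"
  shows "(2*p)^card II \<le> Pp t" "Pp t \<le> (2*q)^card II" "(2*(1-q))^card II \<le> Pm t" "Pm t \<le> (2*(1-p))^card II"
proof -
  have "(\<Prod>k\<in>II. 2*p) \<le> Pp t" unfolding Pp_def using t pq by (intro prod_mono) auto
  then show "(2*p)^card II \<le> Pp t" by simp
  have "Pp t \<le> (\<Prod>k\<in>II. 2*q)" unfolding Pp_def using t pq by (intro prod_mono) auto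
  then show "Pp t \<le> (2*q)^card II" by simp
  have "(\<Prod>k\<in>II. 2*(1-q)) \<le> Pm t" unfolding Pm_def using t pq by (intro prod_mono) auto
  then show "(2*(1-q))^card II \<le> Pm t" by simp
  have "Pm t \<le> (\<Prod>k\<in>II. 2*(1-p))" unfolding Pm_def using t pq by (intro prod_mono) auto
  then show "Pm t \<le> (2*(1-p))^card II" by simp
qed

lemma V_strict: "strict_convex_on {0<..<1} V"
  unfolding strict_convex_on_def
proof (intro conjI ballI allI impI)
  show "convex {0<..<(1::real)}" by (rule convex_real_interval)
  fix x y u :: real
  assume x: "x \<in> {0<..<1}" and y: "y \<in> {0<..<1}" and u: "x \<noteq> y \<and> 0 < u \<and> u < 1"
  define lo where "lo = min x y"
  define hi where "hi = max x y"
  define m where "m = card II"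
  have lh: "0 < lo" "lo < hi" "hi < 1" using x y u unfolding lo_def hi_def by auto
  obtain p q where pq: "0 < p" "p < q" "q < 1"
    and c1: "(1-hi)*(1-p)^m < hi*p^m" and c2: "lo*q^m < (1-lo)*(1-q)^m"
    using exists_pq[OF lh, of m] card_II unfolding m_def by blast
  define B where "B = PiE II (\<lambda>_. {p<..<q})"
  have Bs: "B \<in> sets QQ" unfolding B_def QQ_def by (rule sets_PiM_I_finite[OF fin_II]) simp
  have Bpos: "emeasure QQ B \<noteq> 0" unfolding B_def by (rule box_pos[OF pq])
  define z where "z = u * x + (1 - u) * y"
  have strict: "W z t < u * W x t + (1 - u) * W y t" if t: "t \<in> B" for t
  proof -
    have tk: "\<forall>k\<in>II. p < t k \<and> t k < q" using t unfolding B_def by auto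
    note bb = box_bounds[OF tk pq, folded m_def]
    have two: "(2::real)^m > 0" by simp
    have "lo * Pp t \<le> lo * (2*q)^m" using bb lh by (intro mult_left_mono) auto
    also have "\<dots> = 2^m * (lo * q^m)" unfolding power_mult_distrib by (simp only: mult_ac)
    also have "\<dots> < 2^m * ((1-lo)*(1-q)^m)" using c2 two by (intro mult_strict_left_mono) auto
    also have "\<dots> = (1-lo) * (2*(1-q))^m" unfolding power_mult_distrib by (simp only: mult_ac)
    also have "\<dots> \<le> (1-lo) * Pm t" using bb lh by (intro mult_left_mono) auto
    finally have A1: "lo * Pp t < (1 - lo) * Pm t" .
    have "(1-hi) * Pm t \<le> (1-hi) * (2*(1-p))^m" using bb lh by (intro mult_left_mono) auto
    also have "\<dots> = 2^m * ((1-hi)*(1-p)^m)" unfolding power_mult_distrib by (simp only: mult_ac)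
    also have "\<dots> < 2^m * (hi*p^m)" using c1 two by (intro mult_strict_left_mono) auto
    also have "\<dots> = hi * (2*p)^m" unfolding power_mult_distrib by (simp only: mult_ac)
    also have "\<dots> \<le> hi * Pp t" using bb lh by (intro mult_left_mono) auto
    finally have A2: "(1 - hi) * Pm t < hi * Pp t" .
    show ?thesis unfolding W_def z_def
      by (rule W_strict) (use u A1 A2 in \<open>auto simp: lo_def hi_def\<close>)
  qed
  have le: "W z t \<le> u * W x t + (1 - u) * W y t" for t
    unfolding W_def z_def by (rule W_conv) (use u in auto)
  interpret F: finite_measure QQ by (rule fin_QQ)
  have "integral\<^sup>L QQ (W z) < (\<integral> t. u * W x t + (1 - u) * W y t \<partial>QQ)"
  proof (rule F.integral_less_AE[OF int_W _ Bpos Bs])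
    show "integrable QQ (\<lambda>t. u * W x t + (1 - u) * W y t)" using int_W by simp
    show "AE t in QQ. t \<in> B \<longrightarrow> W z t \<noteq> u * W x t + (1 - u) * W y t"
      using strict by (intro AE_I2) (auto simp: less_le)
    show "AE t in QQ. W z t \<le> u * W x t + (1 - u) * W y t" using le by simp
  qed
  also have "\<dots> = u * V x + (1 - u) * V y" unfolding V_def using int_W by simp
  finally show "V (u * x + (1 - u) * y) < u * V x + (1 - u) * V y" unfolding V_def z_def .
qed

end

theorem lemmaB1:
  fixes n i :: nat and gp gm :: "real \<Rightarrow> real"
  assumes n: "n \<ge> 2" and i: "i < n"
    and meas_p: "gp \<in> borel_measurable borel" and meas_m: "gm \<in> borel_measurable borel"
    and nonneg_p: "\<And>x. gp x \<ge> 0" and nonneg_m: "\<And>x. gm x \<ge> 0"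
    and supp_p: "\<And>x. x \<notin> {0..1} \<Longrightarrow> gp x = 0"
    and supp_m: "\<And>x. x \<notin> {0..1} \<Longrightarrow> gm x = 0"
    and prob_p: "(\<integral>\<^sup>+ x. ennreal (gp x) \<partial>lborel) = 1"
    and prob_m: "(\<integral>\<^sup>+ x. ennreal (gm x) \<partial>lborel) = 1"
    and mutual_ac: "AE x in lborel. (gp x = 0 \<longleftrightarrow> gm x = 0)"
    and normalized: "AE x in lborel. x \<in> {0..1} \<longrightarrow> gp x = x * (gp x + gm x)"
    and support: "\<And>a b. 0 \<le> a \<Longrightarrow> a < b \<Longrightarrow> b \<le> 1 \<Longrightarrow>
         measure (sig_dist (\<lambda>x. (gp x + gm x) / 2)) {a<..<b} > 0"
  shows "strict_convex_on {0<..<1} (Ubar n i gp gm)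
       \<and> (\<forall>s\<in>{0<..<1}. Ubar n i gp gm differentiable (at s))
       \<and> (Ubar n i gp gm has_real_derivative 0) (at_right 0)"
proof -
  interpret S: setting n i gp gm
    by (rule setting.intro) (use assms in auto)
  have U: "Ubar n i gp gm = S.V" by (rule ext) (rule S.Ubar_V)
  show ?thesis unfolding U using S.V_strict S.V_differentiable S.V_right0 by auto
qed

end
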